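(* Under the setup in the context, $$\sup_{t\in\mathbb{R}}\big|\mathbb{P}(\|T_n\|_\infty\le t)-\mathbb{P}(\|T_n^Y\|_\infty\le t)\big|\le n\,\mathbb{P}\Big(\max_{1\le j\le d}\frac{(e_j^\top X_1)^2}{a_j^2}>n\Big).$$
   Context: Let $n\ge1$, $d\ge1$, and let $X_1,\dots,X_n$ be IID integrable random vectors in $\mathbb{R}^d$ with $\mathbb{E}X_1=0$ and $\mathbb{P}(e_j^\top X_1\neq0)>0$ for every $j$, where $e_j$ is the $j$-th canonical basis vector; $\|\cdot\|_\infty$ is the max-norm. For each $j$ define $a_j\ge0$ by $a_j^2:=\sup\{b\ge0:\mathbb{E}[(e_j^\top X_1)^2\mathbf{1}\{(e_j^\top X_1)^2\le bn\}]\ge b\}$, and $e_j^\top Y_i := \frac{e_j^\top X_i}{a_j n^{1/2}}\mathbf{1}\{(e_j^\top X_i)^2\le a_j^2 n\}$. Define $e_j^\top T_n := |\sum_{i=1}^n e_j^\top X_i|/\sqrt{\sum_{i=1}^n (e_j^\top X_i)^2}$ and $e_j^\top T_n^Y := |\sum_{i=1}^n e_j^\top Y_i|/\sqrt{\sum_{i=1}^n (e_j^\top Y_i)^2}$ (with the same fixed convention for $0/0$ in both). *)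

theory Defs
  imports "HOL-Probability.Probability"
begin

definition trunc_level :: "'a measure \<Rightarrow> (nat \<Rightarrow> 'a \<Rightarrow> real ^ 'd) \<Rightarrow> nat \<Rightarrow> 'd \<Rightarrow> real" where
  "trunc_level M X n j = sqrt (Sup {b::real. b \<ge> 0 \<and>
      (\<integral>\<omega>. (X 1 \<omega> $ j)\<^sup>2 * indicator {\<omega>. (X 1 \<omega> $ j)\<^sup>2 \<le> b * real n} \<omega> \<partial>M) \<ge> b})"

definition trunc_vec :: "'a measure \<Rightarrow> (nat \<Rightarrow> 'a \<Rightarrow> real ^ 'd) \<Rightarrow> nat \<Rightarrow> nat \<Rightarrow> 'a \<Rightarrow> real ^ 'd" where
  "trunc_vec M X n i \<omega> = (\<chi> j. (X i \<omega> $ j) / (trunc_level M X n j * sqrt (real n))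
      * indicator {x. x\<^sup>2 \<le> (trunc_level M X n j)\<^sup>2 * real n} (X i \<omega> $ j))"

text \<open>Self-normalized statistic, coordinatewise; 0/0 = 0 convention (Isabelle division).\<close>
definition self_norm :: "(nat \<Rightarrow> 'a \<Rightarrow> real ^ 'd) \<Rightarrow> nat \<Rightarrow> 'a \<Rightarrow> real ^ 'd" where
  "self_norm Z n \<omega> = (\<chi> j. \<bar>\<Sum>i=1..n. Z i \<omega> $ j\<bar> / sqrt (\<Sum>i=1..n. (Z i \<omega> $ j)\<^sup>2))"

definition max_norm :: "real ^ 'd \<Rightarrow> real" where
  "max_norm x = Max (range (\<lambda>j. \<bar>x $ j\<bar>))"

end

theory Submission
  imports Defs
begin

lemma comp_meas:
  fixes f :: "'a \<Rightarrow> real ^ 'd"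
  shows "f \<in> borel_measurable M \<Longrightarrow> (\<lambda>\<omega>. f \<omega> $ j :: real) \<in> borel_measurable M"
proof -
  assume f: "f \<in> borel_measurable M"
  have "(\<lambda>x::real^'d. x $ j) \<in> borel_measurable borel"
    by (intro borel_measurable_continuous_onI continuous_on_component continuous_on_id)
  from measurable_compose[OF f this] show ?thesis by (simp add: o_def)
qed

lemma max_norm_le: "max_norm (x :: real ^ 'd) \<le> t \<longleftrightarrow> (\<forall>j. \<bar>x $ j\<bar> \<le> t)"
proof -
  have "finite (range (\<lambda>j. \<bar>x $ j\<bar>))" by simp
  moreover have "range (\<lambda>j. \<bar>x $ j\<bar>) \<noteq> {}" by simp
  ultimately show ?thesis unfolding max_norm_def by (simp add: Max_le_iff)
qed

lemma scale_self_norm: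
  fixes x :: "nat \<Rightarrow> real" and c :: real
  assumes "c \<noteq> 0"
  shows "\<bar>\<Sum>i=1..n. x i / c\<bar> / sqrt (\<Sum>i=1..n. (x i / c)\<^sup>2)
       = \<bar>\<Sum>i=1..n. x i\<bar> / sqrt (\<Sum>i=1..n. (x i)\<^sup>2)"
proof -
  have s1: "(\<Sum>i=1..n. x i / c) = (\<Sum>i=1..n. x i) / c" by (simp add: sum_divide_distrib)
  have s2: "(\<Sum>i=1..n. (x i / c)\<^sup>2) = (\<Sum>i=1..n. (x i)\<^sup>2) / c\<^sup>2"
    by (simp add: sum_divide_distrib power_divide)
  have s3: "sqrt ((\<Sum>i=1..n. (x i)\<^sup>2) / c\<^sup>2) = sqrt (\<Sum>i=1..n. (x i)\<^sup>2) / \<bar>c\<bar>"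
    by (simp add: real_sqrt_divide)
  show ?thesis unfolding s1 s2 s3 using assms by (simp add: abs_divide)
qed

theorem lemma2:
  fixes M :: "'a measure" and X :: "nat \<Rightarrow> 'a \<Rightarrow> real ^ 'd" and n :: nat
  assumes "prob_space M"
    and "n \<ge> 1"
    and "\<And>i. i \<in> {1..n} \<Longrightarrow> X i \<in> borel_measurable M"
    and "prob_space.indep_vars M (\<lambda>_. borel) X {1..n}"
    and "\<And>i. i \<in> {1..n} \<Longrightarrow> distr M borel (X i) = distr M borel (X 1)"
    and "integrable M (X 1)"
    and "(\<integral>\<omega>. X 1 \<omega> \<partial>M) = 0"
    and "\<And>j. measure M {\<omega> \<in> space M. X 1 \<omega> $ j \<noteq> 0} > 0"
  shows "(SUP t::real. \<bar>measure M {\<omega> \<in> space M. max_norm (self_norm X n \<omega>) \<le> t}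
              - measure M {\<omega> \<in> space M. max_norm (self_norm (trunc_vec M X n) n \<omega>) \<le> t}\<bar>)
         \<le> real n * measure M {\<omega> \<in> space M.
              \<exists>j. (X 1 \<omega> $ j)\<^sup>2 > (trunc_level M X n j)\<^sup>2 * real n}"
proof -
  interpret P: prob_space M by fact
  define a where "a = trunc_level M X n"
  define S where "S = {x :: real ^ 'd. \<exists>j. (x $ j)\<^sup>2 > (a j)\<^sup>2 * real n}"
  have Sb: "S \<in> sets borel"
  proof -
    have "S = (\<Union>j. {x :: real ^ 'd. (x $ j)\<^sup>2 > (a j)\<^sup>2 * real n})" unfolding S_def by auto
    also have "\<dots> \<in> sets borel"
    proof (rule sets.finite_UN)
      fix j
      have "(\<lambda>x::real^'d. x $ j) \<in> borel_measurable borel"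
        by (intro borel_measurable_continuous_onI continuous_on_component continuous_on_id)
      then show "{x :: real ^ 'd. (x $ j)\<^sup>2 > (a j)\<^sup>2 * real n} \<in> sets borel"
        by (intro borel_open open_Collect_less continuous_intros)
    qed auto
    finally show ?thesis .
  qed
  define F where "F i = {\<omega> \<in> space M. X i \<omega> \<in> S}" for i
  have Fs: "F i \<in> sets M" if "i \<in> {1..n}" for i
  proof -
    have "F i = X i -` S \<inter> space M" unfolding F_def by auto
    then show ?thesis using measurable_sets[OF assms(3)[OF that] Sb] by simp
  qed
  have Feq: "measure M (F i) = measure M (F 1)" if "i \<in> {1..n}" for i
  proof -
    have "measure M (F i) = measure (distr M borel (X i)) S"
      using measure_distr[OF assms(3)[OF that] Sb] unfolding F_def
      by (simp add: vimage_def Int_def conj_commute)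
    also have "\<dots> = measure (distr M borel (X 1)) S" using assms(5)[OF that] by simp
    also have "\<dots> = measure M (F 1)"
      using measure_distr[OF assms(3) Sb, of 1] assms(2) unfolding F_def
      by (simp add: vimage_def Int_def conj_commute)
    finally show ?thesis .
  qed
  define E where "E = (\<Union>i\<in>{1..n}. F i)"
  have Es: "E \<in> sets M" unfolding E_def using Fs by auto
  have PE: "measure M E \<le> real n * measure M (F 1)"
  proof -
    have "measure M E \<le> (\<Sum>i\<in>{1..n}. measure M (F i))"
      unfolding E_def by (rule P.finite_measure_subadditive_finite) (use Fs in auto)
    also have "\<dots> = (\<Sum>i\<in>{1..n}. measure M (F 1))" by (intro sum.cong refl Feq)
    finally show ?thesis by simp
  qed
  have F1: "F 1 = {\<omega> \<in> space M. \<exists>j. (X 1 \<omega> $ j)\<^sup>2 > (trunc_level M X n j)\<^sup>2 * real n}"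
    unfolding F_def S_def a_def by simp
  have eqv: "self_norm X n \<omega> = self_norm (trunc_vec M X n) n \<omega>" if "\<omega> \<in> space M - E" for \<omega>
  proof -
    have small: "(X i \<omega> $ j)\<^sup>2 \<le> (a j)\<^sup>2 * real n" if "i \<in> {1..n}" for i j
      using \<open>\<omega> \<in> space M - E\<close> that unfolding E_def F_def S_def by (auto simp: not_less)
    show ?thesis unfolding self_norm_def
    proof (rule vec_eq_iff[THEN iffD2], intro allI)
      fix j
      have tv: "trunc_vec M X n i \<omega> $ j = X i \<omega> $ j / (a j * sqrt (real n))"
        if "i \<in> {1..n}" for i
        using small[OF that, of j] unfolding trunc_vec_def a_def by simp
      show "(\<chi> j. \<bar>\<Sum>i = 1..n. X i \<omega> $ j\<bar> / sqrt (\<Sum>i = 1..n. (X i \<omega> $ j)\<^sup>2)) $ j =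
            (\<chi> j. \<bar>\<Sum>i = 1..n. trunc_vec M X n i \<omega> $ j\<bar> /
               sqrt (\<Sum>i = 1..n. (trunc_vec M X n i \<omega> $ j)\<^sup>2)) $ j"
      proof (cases "a j = 0")
        case True
        have "X i \<omega> $ j = 0" if "i \<in> {1..n}" for i using small[OF that, of j] True by simp
        then have e1: "(\<Sum>i = 1..n. trunc_vec M X n i \<omega> $ j) = 0" "(\<Sum>i = 1..n. X i \<omega> $ j) = 0"
          using tv True by simp_all
        then show ?thesis by simp
      next
        case False
        then have c: "a j * sqrt (real n) \<noteq> 0" using assms(2) by simp
        have e1: "(\<Sum>i = 1..n. trunc_vec M X n i \<omega> $ j) = (\<Sum>i = 1..n. X i \<omega> $ j / (a j * sqrt (real n)))"
          by (intro sum.cong refl tv)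
        have e2: "(\<Sum>i = 1..n. (trunc_vec M X n i \<omega> $ j)\<^sup>2) = (\<Sum>i = 1..n. (X i \<omega> $ j / (a j * sqrt (real n)))\<^sup>2)"
          by (intro sum.cong refl) (simp add: tv)
        show ?thesis unfolding vec_lambda_beta e1 e2 scale_self_norm[OF c] ..
      qed
    qed
  qed
  show ?thesis
  proof (rule cSUP_least)
    fix t :: real
    define A where "A = {\<omega> \<in> space M. max_norm (self_norm X n \<omega>) \<le> t}"
    define B where "B = {\<omega> \<in> space M. max_norm (self_norm (trunc_vec M X n) n \<omega>) \<le> t}"
    have As: "A \<in> sets M"
    proof -
      have "A = {\<omega> \<in> space M. \<forall>j\<in>UNIV. \<bar>self_norm X n \<omega> $ j\<bar> \<le> t}"
        unfolding A_def max_norm_le by simp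
      also have "\<dots> \<in> sets M"
      proof (rule sets.sets_Collect_finite_All)
        fix j
        have m: "(\<lambda>\<omega>. X i \<omega> $ j) \<in> borel_measurable M" if "i \<in> {1..n}" for i
          using comp_meas[OF assms(3)[OF that]] .
        have "(\<lambda>\<omega>. self_norm X n \<omega> $ j) \<in> borel_measurable M"
          unfolding self_norm_def vec_lambda_beta
          by (intro borel_measurable_divide borel_measurable_abs measurable_compose[OF _ borel_measurable_sqrt]
              borel_measurable_sum borel_measurable_power) (auto intro!: measurable_compose[OF _ borel_measurable_sqrt] borel_measurable_sum borel_measurable_power m)
        then show "{\<omega> \<in> space M. \<bar>self_norm X n \<omega> $ j\<bar> \<le> t} \<in> sets M"
          by (intro borel_measurable_le borel_measurable_abs) auto
      qed simp
      finally show ?thesis .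
    qed
    have Bs: "B \<in> sets M"
    proof -
      have "B = {\<omega> \<in> space M. \<forall>j\<in>UNIV. \<bar>self_norm (trunc_vec M X n) n \<omega> $ j\<bar> \<le> t}"
        unfolding B_def max_norm_le by simp
      also have "\<dots> \<in> sets M"
      proof (rule sets.sets_Collect_finite_All)
        fix j
        have m: "(\<lambda>\<omega>. trunc_vec M X n i \<omega> $ j) \<in> borel_measurable M" if "i \<in> {1..n}" for i
        proof -
          have "(\<lambda>\<omega>. X i \<omega> $ j) \<in> borel_measurable M"
            using comp_meas[OF assms(3)[OF that]] .
          then show ?thesis unfolding trunc_vec_def vec_lambda_beta
            by (intro borel_measurable_times borel_measurable_divide borel_measurable_const
               measurable_compose[OF _ borel_measurable_indicator])
               (auto intro!: borel_closed closed_Collect_le continuous_intros)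
        qed
        have "(\<lambda>\<omega>. self_norm (trunc_vec M X n) n \<omega> $ j) \<in> borel_measurable M"
          unfolding self_norm_def vec_lambda_beta
          by (intro borel_measurable_divide borel_measurable_abs measurable_compose[OF _ borel_measurable_sqrt]
              borel_measurable_sum borel_measurable_power) (auto intro!: measurable_compose[OF _ borel_measurable_sqrt] borel_measurable_sum borel_measurable_power m)
        then show "{\<omega> \<in> space M. \<bar>self_norm (trunc_vec M X n) n \<omega> $ j\<bar> \<le> t} \<in> sets M"
          by (intro borel_measurable_le borel_measurable_abs) auto
      qed simp
      finally show ?thesis .
    qed
    have AB: "A \<subseteq> B \<union> E" and BA: "B \<subseteq> A \<union> E"
      using eqv unfolding A_def B_def by auto
    have "measure M A \<le> measure M (B \<union> E)"
      using AB Bs Es by (intro P.finite_measure_mono) auto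
    also have "\<dots> \<le> measure M B + measure M E" using Bs Es by (rule measure_Un_le)
    finally have 1: "measure M A \<le> measure M B + measure M E" .
    have "measure M B \<le> measure M (A \<union> E)"
      using BA As Es by (intro P.finite_measure_mono) auto
    also have "\<dots> \<le> measure M A + measure M E" using As Es by (rule measure_Un_le)
    finally have 2: "measure M B \<le> measure M A + measure M E" .
    show "\<bar>measure M A - measure M B\<bar> \<le> real n * measure M
          {\<omega> \<in> space M. \<exists>j. (X 1 \<omega> $ j)\<^sup>2 > (trunc_level M X n j)\<^sup>2 * real n}"
      using 1 2 PE F1 by simp
  qed simp
qed

end
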